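(* For any two distinct invertible quantum states $\rho,\sigma$ on a common finite-dimensional Hilbert space, \[ H_{\frac12}(\rho\|\sigma)\le\left(\frac{\big(e^{\frac12D_\infty(\rho\|\sigma)}-1\big)^2}{e^{D_\infty(\rho\|\sigma)}-1}+\frac{\big(e^{\frac12D_\infty(\sigma\|\rho)}-1\big)^2}{e^{D_\infty(\sigma\|\rho)}-1}\right)E_1(\rho\|\sigma). \]
   Context: $\log$ is natural. $E_\gamma(\rho\|\sigma)=\mathrm{Tr}(\rho-\gamma\sigma)_+$; $E_1(\rho\|\sigma)=\frac12\|\rho-\sigma\|_1$. $H_{\frac12}(\rho\|\sigma)=\frac12\int_1^\infty\gamma^{-3/2}(E_\gamma(\rho\|\sigma)+E_\gamma(\sigma\|\rho))d\gamma$. The max-relative entropy is $D_\infty(\rho\|\sigma)=\log\|\sigma^{-1/2}\rho\sigma^{-1/2}\|_\infty$ (for invertible $\sigma$). *)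

theory Defs
  imports "HOL-Analysis.Analysis"
begin

text \<open>Operators on a finite-dimensional Hilbert space are complex n x n matrices,
  the dimension being given by the finite index type 'n.\<close>

definition adjoint :: "complex^'n^'n \<Rightarrow> complex^'n^'n" where
  "adjoint A = (\<chi> i j. cnj (A $ j $ i))"

definition hermitian :: "complex^'n^'n \<Rightarrow> bool" where
  "hermitian A \<longleftrightarrow> adjoint A = A"

definition unitary :: "complex^'n^'n \<Rightarrow> bool" where
  "unitary U \<longleftrightarrow> adjoint U ** U = mat 1 \<and> U ** adjoint U = mat 1"

definition diag_mat :: "('n \<Rightarrow> complex) \<Rightarrow> complex^'n^'n" where
  "diag_mat d = (\<chi> i j. if i = j then d i else 0)"

definition qform :: "complex^'n^'n \<Rightarrow> complex^'n \<Rightarrow> complex" where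
  "qform A x = (\<Sum>i\<in>UNIV. \<Sum>j\<in>UNIV. cnj (x $ i) * A $ i $ j * x $ j)"

definition psd :: "complex^'n^'n \<Rightarrow> bool" where
  "psd A \<longleftrightarrow> hermitian A \<and> (\<forall>x. 0 \<le> Re (qform A x))"

definition quantum_state :: "complex^'n^'n \<Rightarrow> bool" where
  "quantum_state \<rho> \<longleftrightarrow> psd \<rho> \<and> trace \<rho> = 1"

definition mat_fun :: "(real \<Rightarrow> real) \<Rightarrow> complex^'n^'n \<Rightarrow> complex^'n^'n" where
  "mat_fun f A = (SOME B. \<exists>U d. unitary U \<and> A = U ** diag_mat (\<lambda>i. complex_of_real (d i)) ** adjoint U
      \<and> B = U ** diag_mat (\<lambda>i. complex_of_real (f (d i))) ** adjoint U)"

definition pos_part :: "complex^'n^'n \<Rightarrow> complex^'n^'n" where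
  "pos_part A = mat_fun (\<lambda>t. max t 0) A"

definition E_hs :: "real \<Rightarrow> complex^'n^'n \<Rightarrow> complex^'n^'n \<Rightarrow> real" where
  "E_hs \<gamma> \<rho> \<sigma> = Re (trace (pos_part (\<rho> - \<gamma> *\<^sub>R \<sigma>)))"

definition H_half :: "complex^'n^'n \<Rightarrow> complex^'n^'n \<Rightarrow> real" where
  "H_half \<rho> \<sigma> = 1/2 * (LBINT \<gamma>:{1..}. \<gamma> powr (-3/2) * (E_hs \<gamma> \<rho> \<sigma> + E_hs \<gamma> \<sigma> \<rho>))"

definition op_norm :: "complex^'n^'n \<Rightarrow> real" where
  "op_norm A = onorm (\<lambda>x. A *v x)"

definition D_max :: "complex^'n^'n \<Rightarrow> complex^'n^'n \<Rightarrow> real" where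
  "D_max \<rho> \<sigma> = ln (op_norm (mat_fun (\<lambda>t. t powr (-1/2)) \<sigma> ** \<rho> ** mat_fun (\<lambda>t. t powr (-1/2)) \<sigma>))"

end

theory Submission
  imports Defs
begin


definition cinner :: "complex^'n \<Rightarrow> complex^'n \<Rightarrow> complex" where
  "cinner x y = (\<Sum>i\<in>UNIV. cnj (x$i) * y$i)"

lemma qform_cinner: "qform A x = cinner x (A *v x)"
  by (simp add: qform_def cinner_def matrix_vector_mult_def sum_distrib_left mult.assoc)

lemma Re_cinner: "Re (cinner x y) = inner x y"
  by (simp add: cinner_def inner_vec_def inner_complex_def Re_sum)

lemma Im_cinner: "Im (cinner x y) = inner (\<i> *s x) y"
  by (simp add: cinner_def inner_vec_def inner_complex_def Im_sum vector_scalar_mult_def algebra_simps)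

lemma cinner_eq: "cinner x y = Complex (inner x y) (inner (\<i> *s x) y)"
  by (metis Re_cinner Im_cinner complex.collapse)

lemma cinner_adj: "cinner x (B *v y) = cinner (adjoint B *v x) y"
proof -
  have "cinner x (B *v y) = (\<Sum>i\<in>UNIV. \<Sum>j\<in>UNIV. cnj (x$i) * B$i$j * y$j)"
    by (simp add: cinner_def matrix_vector_mult_def sum_distrib_left mult.assoc)
  also have "\<dots> = (\<Sum>j\<in>UNIV. \<Sum>i\<in>UNIV. cnj (x$i) * B$i$j * y$j)"
    by (rule sum.swap)
  also have "\<dots> = cinner (adjoint B *v x) y"
    by (simp add: cinner_def adjoint_def matrix_vector_mult_def sum_distrib_left mult.commute mult.left_commute)
  finally show ?thesis .
qed

lemma herm_adj: "hermitian A \<Longrightarrow> adjoint A = A" by (simp add: hermitian_def)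

lemma cinner_herm: "hermitian A \<Longrightarrow> cinner x (A *v y) = cinner (A *v x) y"
  by (simp add: cinner_adj hermitian_def)

lemma inner_herm: "hermitian A \<Longrightarrow> inner x (A *v y) = inner (A *v x) y"
  by (metis Re_cinner cinner_herm)

lemma ii_inner_swap: "inner (\<i> *s a) b = - inner (\<i> *s b) a"
proof -
  have "cinner b a = cnj (cinner a b)"
    unfolding cinner_def cnj_sum by (simp add: mult.commute)
  then show ?thesis by (simp flip: Im_cinner)
qed

lemma mv_smult: "A *v (c *s x) = c *s (A *v (x::complex^'n))"
  by (simp add: vec_eq_iff matrix_vector_mult_def vector_scalar_mult_def sum_distrib_left mult.left_commute)

lemma scaleR_smult: "c *\<^sub>R (x::complex^'n) = complex_of_real c *s x"
  unfolding vec_eq_iff vector_scaleR_component vector_scalar_mult_def vec_lambda_beta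
  by (simp add: scaleR_conv_of_real)

lemma mv_scaleR: "A *v (c *\<^sub>R x) = c *\<^sub>R (A *v (x::complex^'n))"
  by (simp add: scaleR_smult mv_smult)

lemma smult_scaleR: "c *s (r *\<^sub>R (x::complex^'n)) = r *\<^sub>R (c *s x)"
  by (simp add: vec_eq_iff vector_scalar_mult_def scaleR_conv_of_real mult.left_commute)




lemma eigvec_exists:
  fixes A :: "complex^'n^'n" and u :: "nat \<Rightarrow> complex^'n" and d :: "nat \<Rightarrow> real"
  assumes herm: "hermitian A" and kn: "k < CARD('n)"
    and eig: "\<And>j. j < k \<Longrightarrow> A *v u j = d j *\<^sub>R u j"
  shows "\<exists>x l. norm x = 1 \<and> (\<forall>j<k. inner (u j) x = 0 \<and> inner (\<i> *s u j) x = 0) \<and> A *v x = l *\<^sub>R x"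
proof -
  define S where "S = u ` {..<k} \<union> (\<lambda>v. \<i> *s v) ` u ` {..<k}"
  have fS: "finite S" by (simp add: S_def)
  have c1: "card (u ` {..<k}) \<le> k" using card_image_le[of "{..<k}" u] by simp
  have c2: "card ((\<lambda>v. \<i> *s v) ` u ` {..<k}) \<le> k"
    using card_image_le[of "u ` {..<k}" "\<lambda>v. \<i> *s v"] c1 by simp
  have "card S \<le> k + k" unfolding S_def using card_Un_le c1 c2 by (meson add_mono order_trans)
  then have "dim S < DIM(complex^'n)" using dim_le_card'[OF fS] kn by simp
  then obtain z :: "complex^'n" where z0: "z \<noteq> 0" and zo: "\<And>y. y \<in> span S \<Longrightarrow> orthogonal z y"
    using orthogonal_to_subspace_exists by blast
  define W where "W = {x::complex^'n. \<forall>j<k. inner (u j) x = 0 \<and> inner (\<i> *s u j) x = 0}"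
  have zW: "z \<in> W"
  proof -
    have "inner (u j) z = 0 \<and> inner (\<i> *s u j) z = 0" if "j < k" for j
    proof -
      have "u j \<in> span S" "\<i> *s u j \<in> span S" using that by (auto simp: S_def intro!: span_base)
      then show ?thesis using zo by (metis orthogonal_def inner_commute)
    qed
    then show ?thesis by (simp add: W_def)
  qed
  have Wadd: "x \<in> W \<Longrightarrow> y \<in> W \<Longrightarrow> x + y \<in> W" for x y by (simp add: W_def inner_add_right)
  have Wscale: "x \<in> W \<Longrightarrow> c *\<^sub>R x \<in> W" for x c by (simp add: W_def inner_scaleR_right)
  have AW: "A *v x \<in> W" if xW: "x \<in> W" for x
  proof -
    have "inner (u j) (A *v x) = 0 \<and> inner (\<i> *s u j) (A *v x) = 0" if "j < k" for j
    proof -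
      have "inner (u j) (A *v x) = inner (d j *\<^sub>R u j) x" using inner_herm[OF herm] eig[OF that] by metis
      also have "\<dots> = 0" using xW that by (simp add: W_def inner_scaleR_left)
      finally have 1: "inner (u j) (A *v x) = 0" .
      have "inner (\<i> *s u j) (A *v x) = inner (A *v (\<i> *s u j)) x" using inner_herm[OF herm] by metis
      also have "\<dots> = inner (d j *\<^sub>R (\<i> *s u j)) x" by (simp add: mv_smult eig[OF that] smult_scaleR)
      also have "\<dots> = 0" using xW that by (simp add: W_def inner_scaleR_left)
      finally show ?thesis using 1 by simp
    qed
    then show ?thesis by (simp add: W_def)
  qed
  define K where "K = W \<inter> sphere 0 1"
  have "W = (\<Inter>j\<in>{..<k}. {x. inner (u j) x = 0} \<inter> {x. inner (\<i> *s u j) x = 0})"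
    by (auto simp: W_def)
  then have "closed W" by (auto intro!: closed_INT closed_Int closed_hyperplane)
  then have cK: "compact K" unfolding K_def by (intro closed_Int_compact compact_sphere)
  have "(1 / norm z) *\<^sub>R z \<in> K" using z0 zW Wscale by (simp add: K_def)
  then have neK: "K \<noteq> {}" by auto
  define f where "f x = inner x (A *v x)" for x
  have "continuous_on UNIV ((*v) A)"
    using linear_continuous_on[OF matrix_vector_mul_bounded_linear] by blast
  then have "continuous_on UNIV f" unfolding f_def
    by (intro continuous_on_inner continuous_on_id) auto
  then have "continuous_on K f" by (rule continuous_on_subset) auto
  then obtain x where xK: "x \<in> K" and xmax: "\<And>y. y \<in> K \<Longrightarrow> f y \<le> f x"
    using continuous_attains_sup[OF cK neK] by blast
  define l where "l = f x"
  have xW: "x \<in> W" and nx: "norm x = 1" using xK by (auto simp: K_def)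
  have fhom: "f (c *\<^sub>R y) = c^2 * f y" for c y by (simp add: f_def mv_scaleR power2_eq_square)
  have fle: "f y \<le> l * (norm y)^2" if yW: "y \<in> W" for y
  proof (cases "y = 0")
    case True then show ?thesis by (simp add: f_def)
  next
    case False
    have "(1 / norm y) *\<^sub>R y \<in> K" using False yW Wscale by (simp add: K_def)
    then have "f ((1 / norm y) *\<^sub>R y) \<le> l" using xmax l_def by blast
    then have "f y / (norm y)^2 \<le> l" by (simp add: fhom power_divide)
    then show ?thesis using False by (simp add: divide_le_eq mult.commute)
  qed
  define y where "y = A *v x + (- l) *\<^sub>R x"
  have yW: "y \<in> W" unfolding y_def using AW xW Wadd Wscale by blast
  have xx: "inner x x = 1" using nx by (simp add: power2_norm_eq_inner[symmetric])
  have xy: "inner x y = 0" unfolding y_def by (simp add: inner_add_right inner_diff_right xx l_def f_def)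
  have Ax: "A *v x = y + l *\<^sub>R x" by (simp add: y_def)
  have yAx: "inner y (A *v x) = (norm y)^2"
    by (simp add: Ax inner_add_right power2_norm_eq_inner inner_commute[of y x] xy)
  have xAy: "inner x (A *v y) = (norm y)^2"
    using inner_herm[OF herm, of x y] yAx by (simp add: inner_commute)
  define ny where "ny = (norm y)^2"
  define C where "C = l * ny - f y"
  have key: "2 * t * ny \<le> t^2 * C" for t
  proof -
    have "x + t *\<^sub>R y \<in> W" using xW yW Wadd Wscale by blast
    then have h: "f (x + t *\<^sub>R y) \<le> l * (norm (x + t *\<^sub>R y))^2" by (rule fle)
    have "f (x + t *\<^sub>R y) = l + 2 * t * ny + t^2 * f y"
      unfolding f_def
      by (simp add: matrix_vector_right_distrib mv_scaleR inner_add_left inner_add_right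
          yAx xAy ny_def power2_eq_square algebra_simps f_def[symmetric] l_def)
    moreover have "(norm (x + t *\<^sub>R y))^2 = 1 + t^2 * ny"
    proof -
      have "(norm (x + t *\<^sub>R y))^2 = inner (x + t *\<^sub>R y) (x + t *\<^sub>R y)" by (rule power2_norm_eq_inner)
      also have "\<dots> = inner x x + 2 * t * inner x y + t^2 * inner y y"
        by (simp add: inner_add_left inner_add_right inner_commute[of y x] power2_eq_square algebra_simps)
      also have "\<dots> = 1 + t^2 * ny" by (simp add: xx xy ny_def power2_norm_eq_inner)
      finally show ?thesis .
    qed
    ultimately show ?thesis using h by (simp add: C_def algebra_simps)
  qed
  have "ny = 0"
  proof (rule ccontr)
    assume "ny \<noteq> 0"
    then have np: "ny > 0" by (simp add: ny_def)
    define t where "t = ny / (\<bar>C\<bar> + 1)"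
    have tp: "t > 0" using np by (simp add: t_def)
    have "2 * t * ny \<le> t^2 * \<bar>C\<bar>" using key[of t] by (smt (verit) abs_ge_self mult_left_mono zero_le_power2)
    then have "2 * ny \<le> t * \<bar>C\<bar>" using tp by (simp add: power2_eq_square mult.assoc)
    also have "t * \<bar>C\<bar> < ny" using np by (simp add: t_def field_simps)
    finally show False using np by simp
  qed
  then have "y = 0" by (simp add: ny_def)
  then have "A *v x = l *\<^sub>R x" by (simp add: Ax)
  then show ?thesis using nx xW by (auto simp: W_def)
qed

lemma orth_eigs:
  fixes A :: "complex^'n^'n"
  assumes herm: "hermitian A"
  shows "k \<le> CARD('n) \<Longrightarrow> \<exists>u d. \<forall>i<k. \<forall>j<k. inner (u i) (u j) = (if i = j then 1 else 0)
     \<and> inner (\<i> *s u i) (u j) = 0 \<and> A *v u i = d i *\<^sub>R u i"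
proof (induction k)
  case 0 show ?case by simp
next
  case (Suc k)
  then obtain u d where P: "\<forall>i<k. \<forall>j<k. inner (u i) (u j) = (if i = j then 1 else 0)
     \<and> inner (\<i> *s u i) (u j) = 0 \<and> A *v u i = d i *\<^sub>R u i" by auto
  have kn: "k < CARD('n)" using Suc.prems by simp
  obtain x l where nx: "norm x = 1" and xo: "\<forall>j<k. inner (u j) x = 0 \<and> inner (\<i> *s u j) x = 0"
    and ex: "A *v x = l *\<^sub>R x"
    using eigvec_exists[OF herm kn, of u d] P by blast
  have xx: "inner x x = 1" using nx by (simp add: power2_norm_eq_inner[symmetric])
  have ixx: "inner (\<i> *s x) x = 0" using ii_inner_swap[of x x] by simp
  define u' where "u' = u(k := x)"
  define d' where "d' = d(k := l)"
  have "\<forall>i<Suc k. \<forall>j<Suc k. inner (u' i) (u' j) = (if i = j then 1 else 0)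
     \<and> inner (\<i> *s u' i) (u' j) = 0 \<and> A *v u' i = d' i *\<^sub>R u' i"
  proof (intro allI impI)
    fix i j assume i: "i < Suc k" and j: "j < Suc k"
    show "inner (u' i) (u' j) = (if i = j then 1 else 0)
     \<and> inner (\<i> *s u' i) (u' j) = 0 \<and> A *v u' i = d' i *\<^sub>R u' i"
    proof (cases "i = k")
      case True
      then show ?thesis
      proof (cases "j = k")
        case True with \<open>i = k\<close> show ?thesis by (simp add: u'_def d'_def xx ixx ex)
      next
        case False
        then have "j < k" using j by simp
        then show ?thesis using \<open>i = k\<close> False xo ii_inner_swap[of x "u j"]
          by (simp add: u'_def d'_def ex inner_commute)
      qed
    next
      case False
      then have ik: "i < k" using i by simp
      then show ?thesis
      proof (cases "j = k")
        case True with ik xo P show ?thesis by (simp add: u'_def d'_def)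
      next
        case False
        then have "j < k" using j by simp
        with ik P show ?thesis by (simp add: u'_def d'_def)
      qed
    qed
  qed
  then show ?case by blast
qed

lemma spectral:
  fixes A :: "complex^'n^'n"
  assumes herm: "hermitian A"
  shows "\<exists>U d. unitary U \<and> A = U ** diag_mat (\<lambda>i. complex_of_real (d i)) ** adjoint U"
proof -
  obtain u d where P: "\<forall>i<CARD('n). \<forall>j<CARD('n). inner (u i) (u j) = (if i = j then 1 else 0)
     \<and> inner (\<i> *s u i) (u j) = 0 \<and> A *v u i = d i *\<^sub>R u i"
    using orth_eigs[OF herm, of "CARD('n)"] by auto
  obtain g :: "'n \<Rightarrow> nat" where g: "bij_betw g UNIV {0..<CARD('n)}"
    using ex_bij_betw_finite_nat[of "UNIV::'n set"] by auto
  have glt: "g i < CARD('n)" for i using bij_betw_apply[OF g] by auto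
  have ginj: "g i = g j \<longleftrightarrow> i = j" for i j
    using bij_betw_imp_inj_on[OF g] by (auto dest: injD)
  define v where "v i = u (g i)" for i
  define e where "e i = d (g i)" for i
  define U :: "complex^'n^'n" where "U = (\<chi> r c. v c $ r)"
  have ci: "cinner (v a) (v b) = (if a = b then 1 else 0)" for a b
    using P glt[of a] glt[of b] ginj[of a b] by (simp add: cinner_eq v_def one_complex.code zero_complex.code)
  have ev: "A *v v c = e c *\<^sub>R v c" for c using P glt[of c] by (simp add: v_def e_def)
  have UU: "adjoint U ** U = mat 1"
  proof -
    have "(adjoint U ** U) $ a $ b = mat 1 $ a $ b" for a b
      using ci[of a b] by (simp add: matrix_matrix_mult_def adjoint_def U_def mat_def cinner_def)
    then show ?thesis by (simp add: vec_eq_iff)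
  qed
  then have UU2: "U ** adjoint U = mat 1" using matrix_left_right_inverse by blast
  have AU: "A ** U = U ** diag_mat (\<lambda>i. complex_of_real (e i))"
  proof -
    have "(A ** U) $ r $ c = (U ** diag_mat (\<lambda>i. complex_of_real (e i))) $ r $ c" for r c
    proof -
      have "(A ** U) $ r $ c = (A *v v c) $ r"
        by (simp add: matrix_matrix_mult_def matrix_vector_mult_def U_def)
      also have "\<dots> = complex_of_real (e c) * v c $ r"
        unfolding ev vector_scaleR_component by (simp add: scaleR_conv_of_real)
      also have "\<dots> = (U ** diag_mat (\<lambda>i. complex_of_real (e i))) $ r $ c"
        by (simp add: matrix_matrix_mult_def diag_mat_def U_def if_distrib cong: if_cong)
      finally show ?thesis .
    qed
    then show ?thesis by (simp add: vec_eq_iff)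
  qed
  have "A = A ** (U ** adjoint U)" by (simp add: UU2)
  also have "\<dots> = U ** diag_mat (\<lambda>i. complex_of_real (e i)) ** adjoint U"
    by (simp add: matrix_mul_assoc AU)
  finally show ?thesis using UU UU2 unfolding unitary_def by blast
qed




definition decomp :: "complex^'n^'n \<Rightarrow> ('n \<Rightarrow> real) \<Rightarrow> complex^'n^'n \<Rightarrow> bool" where
  "decomp U d X \<longleftrightarrow> unitary U \<and> X = U ** diag_mat (\<lambda>i. complex_of_real (d i)) ** adjoint U"

lemma ent: "(U ** diag_mat a ** adjoint U) $ i $ j = (\<Sum>k\<in>UNIV. U$i$k * a k * cnj (U$j$k))"
  by (simp add: matrix_matrix_mult_def diag_mat_def adjoint_def if_distrib cong: if_cong)

lemma adjoint_mult: "adjoint (A ** B) = adjoint B ** adjoint (A::complex^'n^'n)"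
  by (simp add: adjoint_def vec_eq_iff matrix_matrix_mult_def mult.commute)

lemma adjoint_adjoint: "adjoint (adjoint A) = (A::complex^'n^'n)"
  by (simp add: adjoint_def vec_eq_iff)

lemma adjoint_mat1: "adjoint (mat 1 :: complex^'n^'n) = mat 1"
  by (simp add: adjoint_def vec_eq_iff mat_def)

lemma unitary_mat1: "unitary (mat 1 :: complex^'n^'n)"
  by (simp add: unitary_def adjoint_mat1)

lemma unitary_prod: "unitary U \<Longrightarrow> unitary V \<Longrightarrow> unitary (adjoint U ** V)"
  unfolding unitary_def adjoint_mult adjoint_adjoint
  by (metis matrix_mul_assoc matrix_mul_lid)

lemma hermitian_iff: "hermitian A \<longleftrightarrow> (\<forall>i j. cnj (A$j$i) = A$i$j)"
  by (auto simp: hermitian_def adjoint_def vec_eq_iff)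

lemma hermitian_diff: "hermitian A \<Longrightarrow> hermitian B \<Longrightarrow> hermitian (A - c *\<^sub>R B)"
  by (simp add: hermitian_iff)

lemma hermitian_neg: "hermitian A \<Longrightarrow> hermitian (- A)"
  by (simp add: hermitian_iff)

lemma ent_diff: "(A - c *\<^sub>R B) $ i $ j = A $ i $ j - complex_of_real c * B $ i $ j"
  unfolding vector_minus_component vector_scaleR_component by (simp add: scaleR_conv_of_real)

lemma qform_diff: "qform (A - c *\<^sub>R B) x = qform A x - complex_of_real c * qform B x"
  unfolding qform_def ent_diff by (simp add: sum_subtractf sum_distrib_left algebra_simps)

lemma qform_adj_congr: "qform A (B *v y) = qform (adjoint B ** A ** B) y"
proof -
  have "qform A (B *v y) = cinner (B *v y) (A *v (B *v y))" by (simp add: qform_cinner)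
  also have "\<dots> = cinner y (adjoint B *v (A *v (B *v y)))"
    using cinner_adj[of y "adjoint B"] by (simp add: adjoint_adjoint)
  also have "\<dots> = qform (adjoint B ** A ** B) y"
    by (simp add: qform_cinner matrix_vector_mul_assoc matrix_mul_assoc)
  finally show ?thesis .
qed

lemma cinner_self: "cinner x x = complex_of_real ((norm x)^2)"
proof -
  have "cinner x x = (\<Sum>i\<in>UNIV. complex_of_real ((cmod (x$i))^2))"
    unfolding cinner_def by (rule sum.cong) (simp, metis complex_norm_square mult.commute)
  also have "\<dots> = complex_of_real (\<Sum>i\<in>UNIV. (cmod (x$i))^2)" by (rule of_real_sum[symmetric])
  also have "(\<Sum>i\<in>UNIV. (cmod (x$i))^2) = (norm x)^2"
    unfolding norm_vec_def L2_set_def by (simp add: sum_nonneg)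
  finally show ?thesis .
qed


lemma qform_decomp:
  assumes "X = U ** diag_mat (\<lambda>i. complex_of_real (d i)) ** adjoint U"
  shows "qform X v = complex_of_real (\<Sum>k\<in>UNIV. d k * (cmod ((adjoint U *v v)$k))^2)"
proof -
  define c where "c = adjoint U *v v"
  have "qform X v = cinner v (U *v (diag_mat (\<lambda>i. complex_of_real (d i)) *v c))"
    by (simp add: qform_cinner assms c_def matrix_vector_mul_assoc matrix_mul_assoc)
  also have "\<dots> = cinner c (diag_mat (\<lambda>i. complex_of_real (d i)) *v c)"
    by (simp add: cinner_adj c_def)
  also have "\<dots> = (\<Sum>k\<in>UNIV. complex_of_real (d k * (cmod (c$k))^2))"
  proof -
    have "cinner c (diag_mat (\<lambda>i. complex_of_real (d i)) *v c) = (\<Sum>k\<in>UNIV. cnj (c$k) * (complex_of_real (d k) * c$k))"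
      by (simp add: cinner_def matrix_vector_mult_def diag_mat_def if_distrib if_distribR cong: if_cong)
    also have "\<dots> = (\<Sum>k\<in>UNIV. complex_of_real (d k * (cmod (c$k))^2))"
    proof (rule sum.cong)
      fix k
      have e1: "complex_of_real (d k * (cmod (c$k))^2) = complex_of_real (d k) * (c$k * cnj (c$k))"
        by (simp only: of_real_mult complex_norm_square)
      have e2: "cnj (c$k) * (complex_of_real (d k) * c$k) = complex_of_real (d k) * (c$k * cnj (c$k))"
        by (simp add: mult.commute mult.left_commute)
      show "cnj (c$k) * (complex_of_real (d k) * c$k) = complex_of_real (d k * (cmod (c$k))^2)"
        by (rule trans[OF e2 e1[symmetric]])
    qed simp
    finally show ?thesis .
  qed
  finally show ?thesis by (simp add: c_def)
qed

lemma col_adj: "(adjoint U *v column l V) $ k = (adjoint U ** V) $ k $ l"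
  by (simp add: matrix_vector_mult_def matrix_matrix_mult_def column_def)

lemma unitary_rowsum:
  assumes "unitary (W::complex^'n^'n)"
  shows "(\<Sum>l\<in>UNIV. (cmod (W$k$l))^2) = 1"
proof -
  have "(W ** adjoint W) $ k $ k = 1" using assms by (simp add: unitary_def mat_def)
  then have "(\<Sum>l\<in>UNIV. W$k$l * cnj (W$k$l)) = 1"
    by (simp add: matrix_matrix_mult_def adjoint_def)
  then have "(\<Sum>l\<in>UNIV. complex_of_real ((cmod (W$k$l))^2)) = 1"
    by (simp only: complex_norm_square)
  then have "complex_of_real (\<Sum>l\<in>UNIV. (cmod (W$k$l))^2) = 1" by simp
  then show ?thesis using of_real_eq_1_iff by blast
qed

lemma sumS_bound:
  assumes dec: "decomp U d X" and V: "unitary V"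
  shows "(\<Sum>l\<in>S. Re (qform X (column l V))) \<le> (\<Sum>k\<in>UNIV. max (d k) 0)"
proof -
  define W where "W = adjoint U ** V"
  have uW: "unitary W" using dec V unitary_prod by (auto simp: decomp_def W_def)
  have q: "Re (qform X (column l V)) = (\<Sum>k\<in>UNIV. d k * (cmod (W$k$l))^2)" for l
    using qform_decomp[of X U d "column l V"] dec by (simp add: decomp_def col_adj W_def)
  have "(\<Sum>l\<in>S. Re (qform X (column l V))) = (\<Sum>k\<in>UNIV. d k * (\<Sum>l\<in>S. (cmod (W$k$l))^2))"
    by (simp add: q sum_distrib_left sum.swap[of _ S UNIV])
  also have "\<dots> \<le> (\<Sum>k\<in>UNIV. max (d k) 0)"
  proof (rule sum_mono)
    fix k
    have s0: "0 \<le> (\<Sum>l\<in>S. (cmod (W$k$l))^2)" by (simp add: sum_nonneg)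
    have "(\<Sum>l\<in>S. (cmod (W$k$l))^2) \<le> (\<Sum>l\<in>UNIV. (cmod (W$k$l))^2)"
      by (rule sum_mono2) auto
    then have s1: "(\<Sum>l\<in>S. (cmod (W$k$l))^2) \<le> 1" using unitary_rowsum[OF uW] by simp
    show "d k * (\<Sum>l\<in>S. (cmod (W$k$l))^2) \<le> max (d k) 0"
    proof (cases "d k \<ge> 0")
      case True then show ?thesis using s1 by (simp add: mult_left_le)
    next
      case False then show ?thesis using s0 by (simp add: mult_nonpos_nonneg)
    qed
  qed
  finally show ?thesis .
qed

lemma qform_col_self:
  fixes X :: "complex^'n^'n"
  assumes dec: "decomp U d X"
  shows "Re (qform X (column l U)) = d l"
proof -
  have uU: "adjoint U ** U = mat 1" using dec by (simp add: decomp_def unitary_def)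
  have "Re (qform X (column l U)) = (\<Sum>k\<in>UNIV. d k * (cmod ((mat 1 :: complex^'n^'n)$k$l))^2)"
    using qform_decomp[of X U d "column l U"] dec by (simp add: decomp_def col_adj uU)
  also have "\<dots> = d l" by (simp add: mat_def if_distrib if_distribR cong: if_cong)
  finally show ?thesis .
qed

lemma sumS_attain:
  assumes dec: "decomp U d X"
  shows "(\<Sum>l\<in>{k. d k > 0}. Re (qform X (column l U))) = (\<Sum>k\<in>UNIV. max (d k) 0)"
proof -
  have "(\<Sum>l\<in>{k. d k > 0}. Re (qform X (column l U))) = (\<Sum>l\<in>{k\<in>UNIV. d k > 0}. d l)"
    by (simp add: qform_col_self[OF dec])
  also have "\<dots> = (\<Sum>k\<in>UNIV. if d k > 0 then d k else 0)" by (rule sum.inter_filter) simp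
  also have "\<dots> = (\<Sum>k\<in>UNIV. max (d k) 0)" by (rule sum.cong) auto
  finally show ?thesis .
qed

lemma trace_decomp:
  assumes "unitary U"
  shows "trace (U ** diag_mat (\<lambda>i. complex_of_real (f i)) ** adjoint U) = complex_of_real (\<Sum>k\<in>UNIV. f k)"
proof -
  have "trace ((U ** diag_mat (\<lambda>i. complex_of_real (f i))) ** adjoint U)
      = trace (adjoint U ** (U ** diag_mat (\<lambda>i. complex_of_real (f i))))" by (rule trace_mul_sym)
  also have "\<dots> = trace (diag_mat (\<lambda>i. complex_of_real (f i)))"
    using assms by (simp add: matrix_mul_assoc unitary_def)
  also have "\<dots> = complex_of_real (\<Sum>k\<in>UNIV. f k)" by (simp add: trace_def diag_mat_def)
  finally show ?thesis .
qed

lemma mat_fun_decomp: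
  assumes "hermitian A"
  shows "\<exists>U d. decomp U d A \<and> mat_fun f A = U ** diag_mat (\<lambda>i. complex_of_real (f (d i))) ** adjoint U"
proof -
  obtain U d where "unitary U" "A = U ** diag_mat (\<lambda>i. complex_of_real (d i)) ** adjoint U"
    using spectral[OF assms] by blast
  then have ex: "\<exists>B U d. unitary U \<and> A = U ** diag_mat (\<lambda>i. complex_of_real (d i)) ** adjoint U
      \<and> B = U ** diag_mat (\<lambda>i. complex_of_real (f (d i))) ** adjoint U" by blast
  show ?thesis
    using someI_ex[OF ex] unfolding mat_fun_def decomp_def by blast
qed

definition Epos :: "complex^'n^'n \<Rightarrow> real" where
  "Epos X = Re (trace (pos_part X))"

lemma Epos_decomp:
  assumes herm: "hermitian X" and dec: "decomp U d X"
  shows "Epos X = (\<Sum>k\<in>UNIV. max (d k) 0)"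
proof -
  obtain U' d' where dec': "decomp U' d' X"
    and pp: "pos_part X = U' ** diag_mat (\<lambda>i. complex_of_real (max (d' i) 0)) ** adjoint U'"
    using mat_fun_decomp[OF herm, of "\<lambda>t. max t 0"] unfolding pos_part_def by blast
  have "Epos X = Re (trace (U' ** diag_mat (\<lambda>i. complex_of_real (max (d' i) 0)) ** adjoint U'))"
    by (simp only: Epos_def pp)
  also have "\<dots> = (\<Sum>k\<in>UNIV. max (d' k) 0)"
    using dec' trace_decomp[of U' "\<lambda>i. max (d' i) 0"] by (simp add: decomp_def)
  finally have e: "Epos X = (\<Sum>k\<in>UNIV. max (d' k) 0)" .
  have "(\<Sum>k\<in>UNIV. max (d' k) 0) \<le> (\<Sum>k\<in>UNIV. max (d k) 0)"
    using sumS_attain[OF dec'] sumS_bound[OF dec, of U' "{k. d' k > 0}"] dec' by (simp add: decomp_def)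
  moreover have "(\<Sum>k\<in>UNIV. max (d k) 0) \<le> (\<Sum>k\<in>UNIV. max (d' k) 0)"
    using sumS_attain[OF dec] sumS_bound[OF dec', of U "{k. d k > 0}"] dec by (simp add: decomp_def)
  ultimately show ?thesis using e by simp
qed

lemma Epos_upper:
  assumes herm: "hermitian X" and V: "unitary V"
  shows "(\<Sum>l\<in>S. Re (qform X (column l V))) \<le> Epos X"
proof -
  obtain U d where dec: "decomp U d X" using spectral[OF herm] unfolding decomp_def by blast
  show ?thesis using sumS_bound[OF dec V] Epos_decomp[OF herm dec] by simp
qed

lemma Epos_attain:
  assumes herm: "hermitian X"
  shows "\<exists>V S. unitary V \<and> Epos X = (\<Sum>l\<in>S. Re (qform X (column l V)))"
proof -
  obtain U d where dec: "decomp U d X" using spectral[OF herm] unfolding decomp_def by blast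
  show ?thesis using sumS_attain[OF dec] Epos_decomp[OF herm dec] dec unfolding decomp_def by metis
qed

lemma Epos_nonneg:
  assumes herm: "hermitian X"
  shows "0 \<le> Epos X"
  using Epos_upper[OF herm unitary_mat1, of "{}"] by simp

lemma Epos_neg:
  assumes herm: "hermitian X"
  shows "Epos X - Epos (- X) = Re (trace X)"
proof -
  obtain U d where dec: "decomp U d X" using spectral[OF herm] unfolding decomp_def by blast
  have "- X = U ** diag_mat (\<lambda>i. complex_of_real (- d i)) ** adjoint U"
    using dec unfolding decomp_def by (simp add: vec_eq_iff ent sum_negf)
  then have dec2: "decomp U (\<lambda>i. - d i) (- X)" using dec by (simp add: decomp_def)
  have "Epos X - Epos (- X) = (\<Sum>k\<in>UNIV. max (d k) 0) - (\<Sum>k\<in>UNIV. max (- d k) 0)"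
    using Epos_decomp[OF herm dec] Epos_decomp[OF hermitian_neg[OF herm] dec2] by simp
  also have "\<dots> = (\<Sum>k\<in>UNIV. d k)" by (simp add: sum_subtractf[symmetric]) (rule sum.cong, auto)
  also have "\<dots> = Re (trace X)" using dec trace_decomp[of U d] by (simp add: decomp_def)
  finally show ?thesis .
qed




lemma decomp_col_eig:
  assumes dec: "decomp U d X"
  shows "X *v column k U = d k *\<^sub>R column k U"
proof -
  have uU: "adjoint U ** U = mat 1" using dec by (simp add: decomp_def unitary_def)
  have "X ** U = U ** diag_mat (\<lambda>i. complex_of_real (d i)) ** (adjoint U ** U)"
    using dec by (simp add: decomp_def matrix_mul_assoc)
  then have XU: "X ** U = U ** diag_mat (\<lambda>i. complex_of_real (d i))" by (simp add: uU)
  have "(X *v column k U) $ i = (d k *\<^sub>R column k U) $ i" for i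
  proof -
    have "(X *v column k U) $ i = (X ** U) $ i $ k"
      by (simp add: matrix_vector_mult_def matrix_matrix_mult_def column_def)
    also have "\<dots> = U$i$k * complex_of_real (d k)"
      unfolding XU by (simp add: matrix_matrix_mult_def diag_mat_def if_distrib cong: if_cong)
    also have "\<dots> = (d k *\<^sub>R column k U) $ i"
      unfolding vector_scaleR_component by (simp add: column_def scaleR_conv_of_real)
    finally show ?thesis .
  qed
  then show ?thesis by (simp add: vec_eq_iff)
qed

lemma col_nonzero:
  assumes "unitary U"
  shows "column k U \<noteq> 0"
proof
  assume "column k U = 0"
  then have z: "U$r$k = 0" for r by (simp add: vec_eq_iff column_def)
  have "(adjoint U ** U) $ k $ k = 0" by (simp add: matrix_matrix_mult_def adjoint_def z)
  moreover have "(adjoint U ** U) $ k $ k = 1" using assms by (simp add: unitary_def mat_def)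
  ultimately show False by simp
qed

lemma invertible_inj:
  fixes A :: "complex^'n^'n"
  assumes "invertible A" "A *v x = 0"
  shows "x = 0"
proof -
  obtain A' where "A' ** A = mat 1" using assms(1) unfolding invertible_def by blast
  then have "x = A' *v (A *v x)" by (simp add: matrix_vector_mul_assoc)
  then show ?thesis using assms(2) by simp
qed

lemma sum_delta_mult:
  fixes a :: complex and i :: "'n::finite"
  shows "(\<Sum>k\<in>UNIV. (if i = k then a else 0) * f k) = a * f i"
proof -
  have "(\<Sum>k\<in>UNIV. (if i = k then a else 0) * f k) = (\<Sum>k\<in>UNIV. if i = k then a * f k else 0)"
    by (rule sum.cong) auto
  then show ?thesis using sum.delta'[of UNIV i "\<lambda>k. a * f k"] by simp
qed

lemma diag_mult: "diag_mat a ** diag_mat b = diag_mat (\<lambda>k. a k * b k)"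
proof -
  have "(diag_mat a ** diag_mat b) $ i $ j = diag_mat (\<lambda>k. a k * b k) $ i $ j" for i j
  proof -
    have "(diag_mat a ** diag_mat b) $ i $ j = (\<Sum>k\<in>UNIV. (if i = k then a i else 0) * (if k = j then b k else 0))"
      by (simp add: matrix_matrix_mult_def diag_mat_def)
    also have "\<dots> = a i * (if i = j then b i else 0)" by (rule sum_delta_mult)
    also have "\<dots> = diag_mat (\<lambda>k. a k * b k) $ i $ j" by (simp add: diag_mat_def)
    finally show ?thesis .
  qed
  then show ?thesis by (simp add: vec_eq_iff)
qed

lemma diag_prod:
  assumes "unitary U"
  shows "(U ** diag_mat a ** adjoint U) ** (U ** diag_mat b ** adjoint U) = U ** diag_mat (\<lambda>k. a k * b k) ** adjoint U"
proof -
  have uU: "adjoint U ** U = mat 1" using assms by (simp add: unitary_def)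
  have "(U ** diag_mat a ** adjoint U) ** (U ** diag_mat b ** adjoint U)
      = U ** diag_mat a ** (adjoint U ** U) ** diag_mat b ** adjoint U" by (simp add: matrix_mul_assoc)
  also have "\<dots> = U ** diag_mat a ** diag_mat b ** adjoint U" by (simp add: uU)
  also have "\<dots> = U ** (diag_mat a ** diag_mat b) ** adjoint U" by (simp add: matrix_mul_assoc)
  finally show ?thesis by (simp add: diag_mult)
qed

lemma diag_one: "diag_mat (\<lambda>k. 1) = mat 1"
  by (simp add: diag_mat_def mat_def)

lemma adj_decomp_real:
  "adjoint (U ** diag_mat (\<lambda>i. complex_of_real (a i)) ** adjoint U) = U ** diag_mat (\<lambda>i. complex_of_real (a i)) ** adjoint U"
proof -
  have "adjoint (U ** diag_mat (\<lambda>i. complex_of_real (a i)) ** adjoint U) $ i $ j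
      = (U ** diag_mat (\<lambda>i. complex_of_real (a i)) ** adjoint U) $ i $ j" for i j
    unfolding adjoint_def[of "U ** diag_mat (\<lambda>i. complex_of_real (a i)) ** adjoint U"] vec_lambda_beta ent
    by (simp add: mult.commute mult.left_commute)
  then show ?thesis by (simp add: vec_eq_iff)
qed

lemma dom:
  fixes \<rho> \<sigma> :: "complex^'n^'n"
  assumes ps: "psd \<sigma>" and inv: "invertible \<sigma>"
  shows "Re (qform \<rho> x) \<le> op_norm (mat_fun (\<lambda>t. t powr (-1/2)) \<sigma> ** \<rho> ** mat_fun (\<lambda>t. t powr (-1/2)) \<sigma>) * Re (qform \<sigma> x)"
proof -
  have herm: "hermitian \<sigma>" using ps by (simp add: psd_def)
  obtain U e where dec: "decomp U e \<sigma>"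
    and Sdef: "mat_fun (\<lambda>t. t powr (-1/2)) \<sigma> = U ** diag_mat (\<lambda>i. complex_of_real ((e i) powr (-1/2))) ** adjoint U"
    using mat_fun_decomp[OF herm] by blast
  have uU: "unitary U" and sig: "\<sigma> = U ** diag_mat (\<lambda>i. complex_of_real (e i)) ** adjoint U"
    using dec by (auto simp: decomp_def)
  have epos: "e k > 0" for k
  proof -
    have "e k = Re (qform \<sigma> (column k U))" using qform_col_self[OF dec] by simp
    then have "e k \<ge> 0" using ps by (simp add: psd_def)
    moreover have "e k \<noteq> 0"
    proof
      assume "e k = 0"
      then have "\<sigma> *v column k U = 0" using decomp_col_eig[OF dec, of k] by simp
      then have "column k U = 0" using invertible_inj[OF inv] by blast
      then show False using col_nonzero uU by blast
    qed
    ultimately show ?thesis by simp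
  qed
  define S where "S = mat_fun (\<lambda>t. t powr (-1/2)) \<sigma>"
  define R where "R = U ** diag_mat (\<lambda>i. complex_of_real (sqrt (e i))) ** adjoint U"
  have p1: "e k powr (-1/2) * sqrt (e k) = 1" for k
  proof -
    have "e k powr (-1/2) * sqrt (e k) = e k powr (-1/2) * e k powr (1/2)"
      using epos[of k] by (simp add: powr_half_sqrt)
    also have "\<dots> = e k powr 0" by (simp add: powr_add[symmetric])
    finally show ?thesis using epos[of k] by simp
  qed
  have p2: "e k powr (-1/2) * e k * e k powr (-1/2) = 1" for k
  proof -
    have "e k powr (-1/2) * e k * e k powr (-1/2) = e k powr (-1/2) * e k powr 1 * e k powr (-1/2)"
      using epos[of k] by simp
    also have "\<dots> = e k powr (-1/2 + 1 + -1/2)" by (simp only: powr_add)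
    finally show ?thesis using epos[of k] by simp
  qed
  have SR: "S ** R = mat 1"
  proof -
    have "S ** R = U ** diag_mat (\<lambda>k. complex_of_real (e k powr (-1/2)) * complex_of_real (sqrt (e k))) ** adjoint U"
      unfolding S_def Sdef R_def by (rule diag_prod[OF uU])
    also have "(\<lambda>k. complex_of_real (e k powr (-1/2)) * complex_of_real (sqrt (e k))) = (\<lambda>k. 1)"
      using p1 by (simp flip: of_real_mult)
    finally show ?thesis using uU by (simp add: diag_one unitary_def)
  qed
  have SsS: "S ** \<sigma> ** S = mat 1"
  proof -
    have "S ** \<sigma> ** S = U ** diag_mat (\<lambda>k. complex_of_real (e k powr (-1/2)) * complex_of_real (e k) * complex_of_real (e k powr (-1/2))) ** adjoint U"
      unfolding S_def Sdef by (subst sig, simp add: diag_prod[OF uU])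
    also have "(\<lambda>k. complex_of_real (e k powr (-1/2)) * complex_of_real (e k) * complex_of_real (e k powr (-1/2))) = (\<lambda>k. 1)"
      using p2 by (simp flip: of_real_mult)
    finally show ?thesis using uU by (simp add: diag_one unitary_def)
  qed
  have adjS: "adjoint S = S" unfolding S_def Sdef by (rule adj_decomp_real)
  define y where "y = R *v x"
  have xy: "x = S *v y" by (simp add: y_def matrix_vector_mul_assoc SR)
  define X where "X = S ** \<rho> ** S"
  have q1: "qform \<rho> x = qform X y" using qform_adj_congr[of \<rho> S y] xy adjS by (simp add: X_def)
  have "qform \<sigma> x = qform (S ** \<sigma> ** S) y" using qform_adj_congr[of \<sigma> S y] xy adjS by simp
  also have "\<dots> = complex_of_real ((norm y)^2)" by (simp add: SsS qform_cinner cinner_self)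
  finally have q2: "Re (qform \<sigma> x) = (norm y)^2" by simp
  have "Re (qform \<rho> x) = inner y (X *v y)" unfolding q1 by (simp add: qform_cinner Re_cinner)
  also have "\<dots> \<le> norm y * norm (X *v y)" by (rule norm_cauchy_schwarz)
  also have "\<dots> \<le> norm y * (op_norm X * norm y)"
    using onorm[OF matrix_vector_mul_bounded_linear[of X], of y]
    by (intro mult_left_mono) (simp_all add: op_norm_def)
  also have "\<dots> = op_norm X * Re (qform \<sigma> x)" by (simp add: q2 power2_eq_square)
  finally show ?thesis by (simp add: X_def S_def)
qed




lemma sum_delta_r:
  fixes f :: "'n::finite \<Rightarrow> complex"
  shows "(\<Sum>k\<in>UNIV. f k * (if k = l then 1 else 0)) = f l"
proof -
  have "(\<Sum>k\<in>UNIV. f k * (if k = l then 1 else 0)) = (\<Sum>k\<in>UNIV. if k = l then f k else 0)"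
    by (rule sum.cong) auto
  then show ?thesis using sum.delta[of UNIV l f] by simp
qed

lemma sum_delta_l:
  fixes f :: "'n::finite \<Rightarrow> complex"
  shows "(\<Sum>k\<in>UNIV. (if k = l then 1 else 0) * f k) = f l"
proof -
  have "(\<Sum>k\<in>UNIV. (if k = l then 1 else 0) * f k) = (\<Sum>k\<in>UNIV. if k = l then f k else 0)"
    by (rule sum.cong) auto
  then show ?thesis using sum.delta[of UNIV l f] by simp
qed

lemma qform_basis: "qform X (column l (mat 1)) = X $ l $ l"
proof -
  have e: "column l (mat 1) $ j = (if j = l then 1 else (0::complex))" for j
    by (simp add: column_def mat_def)
  have c: "cnj (if i = l then 1 else (0::complex)) = (if i = l then 1 else 0)" for i by simp
  have "qform X (column l (mat 1)) = (\<Sum>i\<in>UNIV. cnj (if i = l then 1 else 0) * (\<Sum>j\<in>UNIV. X$i$j * (if j = l then 1 else 0)))"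
    by (simp only: qform_cinner cinner_def matrix_vector_mult_def e vec_lambda_beta)
  also have "\<dots> = (\<Sum>i\<in>UNIV. (if i = l then 1 else 0) * X$i$l)"
    by (simp only: c sum_delta_r)
  also have "\<dots> = X $ l $ l" by (rule sum_delta_l)
  finally show ?thesis .
qed

lemma gt1:
  fixes \<rho> \<sigma> :: "complex^'n^'n"
  assumes hr: "hermitian \<rho>" and hs: "hermitian \<sigma>" and tr: "trace \<rho> = 1" and ts: "trace \<sigma> = 1"
    and domM: "\<And>x. Re (qform \<rho> x) \<le> M * Re (qform \<sigma> x)" and ne: "\<rho> \<noteq> \<sigma>"
  shows "M > 1"
proof -
  have "(\<Sum>l\<in>UNIV. Re (qform \<rho> (column l (mat 1)))) \<le> (\<Sum>l\<in>UNIV. M * Re (qform \<sigma> (column l (mat 1))))"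
    by (rule sum_mono) (rule domM)
  then have "Re (trace \<rho>) \<le> M * Re (trace \<sigma>)"
    by (simp add: qform_basis trace_def sum_distrib_left)
  then have M1: "1 \<le> M" using tr ts by simp
  have "M \<noteq> 1"
  proof
    assume M: "M = 1"
    define Y where "Y = \<sigma> - 1 *\<^sub>R \<rho>"
    have hY: "hermitian Y" unfolding Y_def by (rule hermitian_diff[OF hs hr])
    obtain U d where dec: "decomp U d Y" using spectral[OF hY] unfolding decomp_def by blast
    have d0: "d k \<ge> 0" for k
    proof -
      have "d k = Re (qform Y (column k U))" using qform_col_self[OF dec] by simp
      also have "\<dots> = Re (qform \<sigma> (column k U)) - Re (qform \<rho> (column k U))"
        unfolding Y_def qform_diff by simp
      finally show ?thesis using domM[of "column k U"] M by simp
    qed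
    have "complex_of_real (\<Sum>k\<in>UNIV. d k) = trace Y"
      using dec trace_decomp[of U d] by (simp add: decomp_def)
    also have "\<dots> = 0" by (simp add: Y_def trace_sub tr ts)
    finally have "(\<Sum>k\<in>UNIV. d k) = 0" by (simp del: of_real_sum)
    then have dz: "d k = 0" for k using d0 sum_nonneg_eq_0_iff[of UNIV d] by simp
    have "Y = 0" using dec unfolding decomp_def by (simp add: vec_eq_iff ent dz)
    then show False using ne by (simp add: Y_def)
  qed
  then show ?thesis using M1 by simp
qed

lemma E_bound:
  fixes \<rho> \<sigma> :: "complex^'n^'n"
  assumes hr: "hermitian \<rho>" and ps: "psd \<sigma>"
    and domM: "\<And>x. Re (qform \<rho> x) \<le> M * Re (qform \<sigma> x)" and M1: "M > 1" and g1: "1 \<le> \<gamma>"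
  shows "E_hs \<gamma> \<rho> \<sigma> \<le> E_hs 1 \<rho> \<sigma> * (max (M - \<gamma>) 0 / (M - 1))"
proof -
  have hs: "hermitian \<sigma>" using ps by (simp add: psd_def)
  have hX: "hermitian (\<rho> - \<gamma> *\<^sub>R \<sigma>)" by (rule hermitian_diff[OF hr hs])
  obtain V S where V: "unitary V" and E: "Epos (\<rho> - \<gamma> *\<^sub>R \<sigma>) = (\<Sum>l\<in>S. Re (qform (\<rho> - \<gamma> *\<^sub>R \<sigma>) (column l V)))"
    using Epos_attain[OF hX] by blast
  define a where "a = (\<Sum>l\<in>S. Re (qform \<rho> (column l V)))"
  define b where "b = (\<Sum>l\<in>S. Re (qform \<sigma> (column l V)))"
  define \<epsilon> where "\<epsilon> = E_hs 1 \<rho> \<sigma>"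
  have Eg: "E_hs \<gamma> \<rho> \<sigma> = a - \<gamma> * b"
    by (simp add: E_hs_def Epos_def[symmetric] E qform_diff a_def b_def sum_subtractf sum_distrib_left)
  have b0: "b \<ge> 0" unfolding b_def using ps by (intro sum_nonneg) (simp add: psd_def)
  have ab: "a \<le> M * b" unfolding a_def b_def sum_distrib_left by (intro sum_mono domM)
  have e1: "a - b \<le> \<epsilon>"
  proof -
    have "(\<Sum>l\<in>S. Re (qform (\<rho> - 1 *\<^sub>R \<sigma>) (column l V))) \<le> Epos (\<rho> - 1 *\<^sub>R \<sigma>)"
      by (rule Epos_upper[OF hermitian_diff[OF hr hs] V])
    then show ?thesis
      by (simp add: \<epsilon>_def E_hs_def Epos_def a_def b_def qform_diff sum_subtractf del: scaleR_one)
  qed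
  show ?thesis
  proof (cases "\<gamma> \<le> M")
    case True
    have "(M - 1) * (a - \<gamma> * b) = (M - \<gamma>) * (a - b) + (\<gamma> - 1) * (a - M * b)" by (simp add: algebra_simps)
    also have "\<dots> \<le> (M - \<gamma>) * \<epsilon> + 0"
      using True g1 e1 ab by (intro add_mono mult_left_mono mult_nonneg_nonpos) auto
    finally have "(M - 1) * (a - \<gamma> * b) \<le> (M - \<gamma>) * \<epsilon>" by simp
    then have "a - \<gamma> * b \<le> (M - \<gamma>) * \<epsilon> / (M - 1)" using M1 by (simp add: le_divide_eq mult.commute)
    then show ?thesis using True by (simp add: Eg \<epsilon>_def[symmetric] mult.commute)
  next
    case False
    have "\<gamma> * b \<ge> M * b" using False b0 by (intro mult_right_mono) auto
    then show ?thesis using False ab by (simp add: Eg)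
  qed
qed

lemma integral_calc:
  fixes M :: real
  assumes M1: "M > 1"
  shows "set_integrable lborel {1..} (\<lambda>\<gamma>::real. \<gamma> powr (-3/2) * max (M - \<gamma>) 0)"
    and "(LBINT \<gamma>:{1..}. \<gamma> powr (-3/2) * max (M - \<gamma>) 0) = 2 * (sqrt M - 1)^2"
proof -
  define f where "f \<gamma> = \<gamma> powr (-3/2) * (M - \<gamma>)" for \<gamma> :: real
  have eqi: "(\<lambda>\<gamma>. indicator {1..} \<gamma> *\<^sub>R (\<gamma> powr (-3/2) * max (M - \<gamma>) 0)) = (\<lambda>\<gamma>::real. indicator {1..M} \<gamma> *\<^sub>R f \<gamma>)"
    by (auto simp: indicator_def f_def fun_eq_iff)
  have cont: "continuous_on {1..M} f" unfolding f_def by (intro continuous_intros) auto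
  have int: "set_integrable lborel {1..M} f" by (rule borel_integrable_atLeastAtMost'[OF cont])
  then show "set_integrable lborel {1..} (\<lambda>\<gamma>::real. \<gamma> powr (-3/2) * max (M - \<gamma>) 0)"
    unfolding set_integrable_def eqi .
  define F where "F \<gamma> = -2 * M * \<gamma> powr (-1/2) - 2 * \<gamma> powr (1/2)" for \<gamma> :: real
  have deriv: "(F has_real_derivative f \<gamma>) (at \<gamma>)" if "\<gamma> > 0" for \<gamma>
  proof -
    have d1: "((\<lambda>z. z powr (-1/2)) has_real_derivative (-1/2) * \<gamma> powr (-1/2 - 1)) (at \<gamma>)"
      by (rule has_real_derivative_powr) (use that in simp)
    have d2: "((\<lambda>z. z powr (1/2)) has_real_derivative (1/2) * \<gamma> powr (1/2 - 1)) (at \<gamma>)"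
      by (rule has_real_derivative_powr) (use that in simp)
    have "((\<lambda>z. (-2 * M) * z powr (-1/2) - 2 * z powr (1/2)) has_real_derivative
        (-2 * M) * ((-1/2) * \<gamma> powr (-1/2 - 1)) - 2 * ((1/2) * \<gamma> powr (1/2 - 1))) (at \<gamma>)"
      by (intro DERIV_diff DERIV_cmult d1 d2)
    moreover have "(\<lambda>z. (-2 * M) * z powr (-1/2) - 2 * z powr (1/2)) = F"
      by (simp add: F_def fun_eq_iff)
    moreover have "(-2 * M) * ((-1/2) * \<gamma> powr (-1/2 - 1)) - 2 * ((1/2) * \<gamma> powr (1/2 - 1)) = f \<gamma>"
    proof -
      have e1: "\<gamma> powr (-1/2 - 1) = \<gamma> powr (-3/2)" by simp
      have "\<gamma> powr (1/2 - 1) = \<gamma> powr (1 + -3/2)" by simp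
      also have "\<dots> = \<gamma> powr 1 * \<gamma> powr (-3/2)" by (rule powr_add)
      also have "\<dots> = \<gamma> * \<gamma> powr (-3/2)" using that by simp
      finally have e2: "\<gamma> powr (1/2 - 1) = \<gamma> * \<gamma> powr (-3/2)" .
      show ?thesis unfolding e1 e2 by (simp add: f_def algebra_simps)
    qed
    ultimately show ?thesis by simp
  qed
  have "(LINT \<gamma>|lborel. indicator {1..M} \<gamma> *\<^sub>R f \<gamma>) = F M - F 1"
  proof (rule integral_FTC_atLeastAtMost)
    show "1 \<le> M" using M1 by simp
    show "continuous_on {1..M} f" by (rule cont)
    fix x :: real assume "1 \<le> x" "x \<le> M"
    then show "(F has_vector_derivative f x) (at x within {1..M})"
      using deriv[of x] by (simp add: has_real_derivative_iff_has_vector_derivative[symmetric] has_field_derivative_at_within)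
  qed
  also have "F M - F 1 = 2 * (sqrt M - 1)^2"
  proof -
    have s: "M powr (1/2) = sqrt M" using M1 by (simp add: powr_half_sqrt)
    define r where "r = sqrt M"
    have rp: "r > 0" using M1 by (simp add: r_def)
    have Mr: "M = r^2" using M1 by (simp add: r_def)
    have "M powr (-1/2) * M powr (1/2) = M powr (-1/2 + 1/2)" by (rule powr_add[symmetric])
    also have "\<dots> = 1" using M1 by simp
    finally have "M powr (-1/2) * r = 1" by (simp add: s r_def)
    then have s2: "M powr (-1/2) = 1 / r" using rp by (simp add: field_simps)
    have F1: "F 1 = -2 * M - 2" by (simp add: F_def)
    have FM: "F M = -2 * M * (1 / r) - 2 * r" unfolding F_def s2 s by (simp add: r_def)
    have "-2 * M * (1 / r) - 2 * r - (-2 * M - 2) = 2 * (r - 1)^2"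
      using rp unfolding Mr by (simp add: field_simps power2_eq_square)
    then show ?thesis unfolding F1 FM r_def[symmetric] .
  qed
  finally show "(LBINT \<gamma>:{1..}. \<gamma> powr (-3/2) * max (M - \<gamma>) 0) = 2 * (sqrt M - 1)^2"
    unfolding set_lebesgue_integral_def eqi .
qed




theorem mainTheorem17:
  fixes \<rho> \<sigma> :: "complex^'n^'n"
  assumes "quantum_state \<rho>" and "quantum_state \<sigma>"
    and "invertible \<rho>" and "invertible \<sigma>"
    and "\<rho> \<noteq> \<sigma>"
  shows "H_half \<rho> \<sigma> \<le>
    ((exp (D_max \<rho> \<sigma> / 2) - 1)^2 / (exp (D_max \<rho> \<sigma>) - 1)
     + (exp (D_max \<sigma> \<rho> / 2) - 1)^2 / (exp (D_max \<sigma> \<rho>) - 1)) * E_hs 1 \<rho> \<sigma>"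
proof -
  have pr: "psd \<rho>" and tr: "trace \<rho> = 1" using assms(1) by (auto simp: quantum_state_def)
  have ps: "psd \<sigma>" and ts: "trace \<sigma> = 1" using assms(2) by (auto simp: quantum_state_def)
  have hr: "hermitian \<rho>" and hs: "hermitian \<sigma>" using pr ps by (auto simp: psd_def)
  define M where "M = op_norm (mat_fun (\<lambda>t. t powr (-1/2)) \<sigma> ** \<rho> ** mat_fun (\<lambda>t. t powr (-1/2)) \<sigma>)"
  define M' where "M' = op_norm (mat_fun (\<lambda>t. t powr (-1/2)) \<rho> ** \<sigma> ** mat_fun (\<lambda>t. t powr (-1/2)) \<rho>)"
  have domM: "Re (qform \<rho> x) \<le> M * Re (qform \<sigma> x)" for x
    unfolding M_def by (rule dom[OF ps assms(4)])
  have domM': "Re (qform \<sigma> x) \<le> M' * Re (qform \<rho> x)" for x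
    unfolding M'_def by (rule dom[OF pr assms(3)])
  have M1: "M > 1" by (rule gt1[OF hr hs tr ts domM assms(5)])
  have M'1: "M' > 1" using assms(5) by (intro gt1[OF hs hr ts tr domM']) auto
  have DM: "D_max \<rho> \<sigma> = ln M" by (simp add: D_max_def M_def)
  have DM': "D_max \<sigma> \<rho> = ln M'" by (simp add: D_max_def M'_def)
  have eh: "exp (ln N / 2) = sqrt N" if "N > 0" for N :: real
  proof -
    have "sqrt N = N powr (1/2)" using that by (simp add: powr_half_sqrt)
    also have "\<dots> = exp ((1/2) * ln N)" using that unfolding powr_def by simp
    finally show ?thesis by (simp add: mult.commute)
  qed
  define \<epsilon> where "\<epsilon> = E_hs 1 \<rho> \<sigma>"
  have eps_sym: "E_hs 1 \<sigma> \<rho> = \<epsilon>"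
  proof -
    have hX: "hermitian (\<rho> - 1 *\<^sub>R \<sigma>)" by (rule hermitian_diff[OF hr hs])
    have "Epos (\<rho> - 1 *\<^sub>R \<sigma>) - Epos (- (\<rho> - 1 *\<^sub>R \<sigma>)) = Re (trace (\<rho> - 1 *\<^sub>R \<sigma>))"
      by (rule Epos_neg[OF hX])
    moreover have "trace (\<rho> - 1 *\<^sub>R \<sigma>) = 0" by (simp add: trace_sub tr ts)
    moreover have "- (\<rho> - 1 *\<^sub>R \<sigma>) = \<sigma> - 1 *\<^sub>R \<rho>" by simp
    ultimately show ?thesis by (simp add: \<epsilon>_def E_hs_def Epos_def del: scaleR_one)
  qed
  have eps0: "0 \<le> \<epsilon>" unfolding \<epsilon>_def E_hs_def Epos_def[symmetric]
    by (rule Epos_nonneg[OF hermitian_diff[OF hr hs]])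
  have b1: "E_hs \<gamma> \<rho> \<sigma> \<le> \<epsilon> * (max (M - \<gamma>) 0 / (M - 1))" if "1 \<le> \<gamma>" for \<gamma>
    unfolding \<epsilon>_def by (rule E_bound[OF hr ps domM M1 that])
  have b2: "E_hs \<gamma> \<sigma> \<rho> \<le> \<epsilon> * (max (M' - \<gamma>) 0 / (M' - 1))" if "1 \<le> \<gamma>" for \<gamma>
    using E_bound[OF hs pr domM' M'1 that] eps_sym by simp
  define h where "h \<gamma> = \<gamma> powr (-3/2) * (E_hs \<gamma> \<rho> \<sigma> + E_hs \<gamma> \<sigma> \<rho>)" for \<gamma> :: real
  define k where "k \<gamma> = \<gamma> powr (-3/2) * max (M - \<gamma>) 0 * (\<epsilon> / (M - 1))
      + \<gamma> powr (-3/2) * max (M' - \<gamma>) 0 * (\<epsilon> / (M' - 1))" for \<gamma> :: real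
  have ik: "set_integrable lborel {1..} k"
    unfolding k_def
    by (intro set_integral_add(1) set_integrable_mult_left integral_calc(1) M1 M'1)
  have i1: "set_integrable lborel {1..} (\<lambda>\<gamma>::real. \<gamma> powr (-3/2) * max (M - \<gamma>) 0 * (\<epsilon> / (M - 1)))"
    by (rule set_integrable_mult_left) (rule integral_calc(1)[OF M1])
  have i2: "set_integrable lborel {1..} (\<lambda>\<gamma>::real. \<gamma> powr (-3/2) * max (M' - \<gamma>) 0 * (\<epsilon> / (M' - 1)))"
    by (rule set_integrable_mult_left) (rule integral_calc(1)[OF M'1])
  have "(LBINT \<gamma>:{1..}. k \<gamma>) = (LBINT \<gamma>:{1..}. \<gamma> powr (-3/2) * max (M - \<gamma>) 0) * (\<epsilon> / (M - 1))
      + (LBINT \<gamma>:{1..}. \<gamma> powr (-3/2) * max (M' - \<gamma>) 0) * (\<epsilon> / (M' - 1))"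
    unfolding k_def by (simp only: set_integral_add(2)[OF i1 i2] set_integral_mult_left)
  also have "\<dots> = 2 * (sqrt M - 1)^2 * (\<epsilon> / (M - 1)) + 2 * (sqrt M' - 1)^2 * (\<epsilon> / (M' - 1))"
    by (simp only: integral_calc(2)[OF M1] integral_calc(2)[OF M'1])
  finally have vk: "(LBINT \<gamma>:{1..}. k \<gamma>) = 2 * (sqrt M - 1)^2 * (\<epsilon> / (M - 1)) + 2 * (sqrt M' - 1)^2 * (\<epsilon> / (M' - 1))" .
  have x1: "exp (D_max \<rho> \<sigma> / 2) = sqrt M" using eh[of M] M1 by (simp add: DM)
  have x2: "exp (D_max \<rho> \<sigma>) = M" using M1 by (simp add: DM)
  have x1': "exp (D_max \<sigma> \<rho> / 2) = sqrt M'" using eh[of M'] M'1 by (simp add: DM')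
  have x2': "exp (D_max \<sigma> \<rho>) = M'" using M'1 by (simp add: DM')
  have RHS: "((exp (D_max \<rho> \<sigma> / 2) - 1)^2 / (exp (D_max \<rho> \<sigma>) - 1)
     + (exp (D_max \<sigma> \<rho> / 2) - 1)^2 / (exp (D_max \<sigma> \<rho>) - 1)) * E_hs 1 \<rho> \<sigma>
     = ((sqrt M - 1)^2 / (M - 1) + (sqrt M' - 1)^2 / (M' - 1)) * \<epsilon>"
    by (simp only: x1 x2 x1' x2' \<epsilon>_def)
  also have "\<dots> = 1/2 * (2 * (sqrt M - 1)^2 * (\<epsilon> / (M - 1)) + 2 * (sqrt M' - 1)^2 * (\<epsilon> / (M' - 1)))"
    by (simp add: algebra_simps)
  finally have RHS: "((exp (D_max \<rho> \<sigma> / 2) - 1)^2 / (exp (D_max \<rho> \<sigma>) - 1)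
     + (exp (D_max \<sigma> \<rho> / 2) - 1)^2 / (exp (D_max \<sigma> \<rho>) - 1)) * E_hs 1 \<rho> \<sigma>
     = 1/2 * (2 * (sqrt M - 1)^2 * (\<epsilon> / (M - 1)) + 2 * (sqrt M' - 1)^2 * (\<epsilon> / (M' - 1)))" .
  have kpos: "0 \<le> (LBINT \<gamma>:{1..}. k \<gamma>)"
    unfolding vk using M1 M'1 eps0 by (intro add_nonneg_nonneg mult_nonneg_nonneg divide_nonneg_nonneg) auto
  have "(LBINT \<gamma>:{1..}. h \<gamma>) \<le> (LBINT \<gamma>:{1..}. k \<gamma>)"
  proof (cases "set_integrable lborel {1..} h")
    case True
    show ?thesis
    proof (rule set_integral_mono[OF True ik])
      fix \<gamma> :: real assume "\<gamma> \<in> {1..}"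
      then have g1: "1 \<le> \<gamma>" by simp
      have gp: "0 \<le> \<gamma> powr (-3/2)" by simp
      have "\<gamma> powr (-3/2) * (E_hs \<gamma> \<rho> \<sigma> + E_hs \<gamma> \<sigma> \<rho>)
          \<le> \<gamma> powr (-3/2) * (\<epsilon> * (max (M - \<gamma>) 0 / (M - 1)) + \<epsilon> * (max (M' - \<gamma>) 0 / (M' - 1)))"
        using b1[OF g1] b2[OF g1] gp by (intro mult_left_mono add_mono) auto
      then show "h \<gamma> \<le> k \<gamma>" by (simp add: h_def k_def algebra_simps)
    qed
  next
    case False
    then have "(LBINT \<gamma>:{1..}. h \<gamma>) = 0"
      unfolding set_integrable_def set_lebesgue_integral_def by (rule not_integrable_integral_eq)
    then show ?thesis using kpos by simp
  qed
  then have "H_half \<rho> \<sigma> \<le> 1/2 * (LBINT \<gamma>:{1..}. k \<gamma>)"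
    by (simp add: H_half_def h_def)
  also have "1/2 * (LBINT \<gamma>:{1..}. k \<gamma>) = 1/2 * (2 * (sqrt M - 1)^2 * (\<epsilon> / (M - 1)) + 2 * (sqrt M' - 1)^2 * (\<epsilon> / (M' - 1)))"
    by (simp only: vk)
  also note RHS[symmetric]
  finally show ?thesis .
qed


end
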